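(* For all integers $\ell\ge 2$, $k\ge 1$, $n\ge 1$: (a) $f_\ell(n,k)\le \frac{n}{k}\,f_{\ell-1}(n,k)$; (b) if $\ell$ is even, then $f_\ell(n,k)\le 1+k\ell\,(f_{\ell-1}(n,k)-1)\le k\ell\, f_{\ell-1}(n,k)$.
   Context: $f_\ell(n,k)$ is the maximum size of a family $\mathcal S$ of subsets of $A_1\cup\dots\cup A_\ell$, where $A_1,\dots,A_\ell$ are pairwise disjoint $n$-element sets, with $|S\cap A_i|=k$ for all $S\in\mathcal S$ and all $i$, such that for distinct $S,T\in\mathcal S$ the number of indices $i$ with $S\cap T\cap A_i=\emptyset$ is odd. (Equivalently, the clique number of the $\ell$-th xor-power of the Kneser graph $KG(n,k)$.) *)

theory Defs
  imports Complex_Main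
begin

text \<open>Ground set: the disjoint union of A_0,...,A_(l-1), where A_i = {i} x {0..<n}.
  For S a subset of it, the trace S \<inter> A_i is identified with {a. (i,a) \<in> S}.\<close>

definition block_trace :: "(nat \<times> nat) set \<Rightarrow> nat \<Rightarrow> nat set" where
  "block_trace S i = {a. (i, a) \<in> S}"

definition xor_family :: "nat \<Rightarrow> nat \<Rightarrow> nat \<Rightarrow> (nat \<times> nat) set set \<Rightarrow> bool" where
  "xor_family l n k F \<longleftrightarrow>
     (\<forall>S\<in>F. S \<subseteq> {..<l} \<times> {..<n} \<and> (\<forall>i<l. card (block_trace S i) = k)) \<and>
     (\<forall>S\<in>F. \<forall>T\<in>F. S \<noteq> T \<longrightarrow>
        odd (card {i. i < l \<and> block_trace S i \<inter> block_trace T i = {}}))"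

text \<open>f_l(n,k): maximum size of such a family (the empty family is always admissible).\<close>
definition f_xor :: "nat \<Rightarrow> nat \<Rightarrow> nat \<Rightarrow> nat" where
  "f_xor l n k = Max (card ` {F. xor_family l n k F})"

end

theory Submission
  imports Defs
begin

definition red :: "nat \<Rightarrow> nat \<Rightarrow> (nat \<times> nat) set \<Rightarrow> (nat \<times> nat) set" where
  "red l i S = {(j,b). j < l - 1 \<and> (if j < i then j else Suc j, b) \<in> S}"

definition sub :: "(nat \<times> nat) set set \<Rightarrow> nat \<Rightarrow> nat \<Rightarrow> (nat \<times> nat) set set" where
  "sub F i a = {S\<in>F. (i,a) \<in> S}"

lemma trace_red: "block_trace (red l i S) j =
   (if j < l - 1 then block_trace S (if j < i then j else Suc j) else {})"
  by (auto simp: block_trace_def red_def)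

lemma fam_sub: "xor_family l n k F \<Longrightarrow> F \<subseteq> Pow ({..<l} \<times> {..<n})"
  by (auto simp: xor_family_def)

lemma fin_fams: "finite {F. xor_family l n k F}"
proof -
  have "{F. xor_family l n k F} \<subseteq> Pow (Pow ({..<l} \<times> {..<n}))" using fam_sub by blast
  then show ?thesis by (rule finite_subset) simp
qed

lemma fin_fam: "xor_family l n k F \<Longrightarrow> finite F"
  using fam_sub by (metis finite_Pow_iff finite_SigmaI finite_lessThan finite_subset)

lemma card_le_f: "xor_family l n k F \<Longrightarrow> card F \<le> f_xor l n k"
  unfolding f_xor_def using fin_fams by (intro Max_ge) auto

lemma f_attained: "\<exists>F. xor_family l n k F \<and> card F = f_xor l n k"
proof -
  have "xor_family l n k {}" by (simp add: xor_family_def)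
  then have "f_xor l n k \<in> card ` {F. xor_family l n k F}"
    unfolding f_xor_def using fin_fams by (intro Max_in) auto
  then show ?thesis by auto
qed

lemma f_pos: assumes "k \<le> n" shows "1 \<le> f_xor m n k"
proof -
  let ?S = "{..<m} \<times> {..<k}"
  have "xor_family m n k {?S}"
    unfolding xor_family_def using assms by (auto simp: block_trace_def)
  from card_le_f[OF this] show ?thesis by simp
qed

lemma count_red:
  assumes "i < l"
  shows "card {j. j < l - 1 \<and> block_trace (red l i S) j \<inter> block_trace (red l i T) j = {}}
    = card {j. j < l \<and> j \<noteq> i \<and> block_trace S j \<inter> block_trace T j = {}}"
proof -
  define \<sigma> where "\<sigma> = (\<lambda>j::nat. if j < i then j else Suc j)"
  define D where "D = (\<lambda>j. block_trace S j \<inter> block_trace T j = {})"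
  have L: "{j. j < l - 1 \<and> block_trace (red l i S) j \<inter> block_trace (red l i T) j = {}}
     = {j. j < l - 1 \<and> D (\<sigma> j)}"
    by (auto simp: trace_red D_def \<sigma>_def)
  have inj: "inj_on \<sigma> X" for X by (auto simp: inj_on_def \<sigma>_def split: if_splits)
  have im: "\<sigma> ` {j. j < l - 1 \<and> D (\<sigma> j)} = {j. j < l \<and> j \<noteq> i \<and> D j}"
  proof
    show "\<sigma> ` {j. j < l - 1 \<and> D (\<sigma> j)} \<subseteq> {j. j < l \<and> j \<noteq> i \<and> D j}"
      using assms by (auto simp: \<sigma>_def)
  next
    show "{j. j < l \<and> j \<noteq> i \<and> D j} \<subseteq> \<sigma> ` {j. j < l - 1 \<and> D (\<sigma> j)}"
    proof
      fix j assume j: "j \<in> {j. j < l \<and> j \<noteq> i \<and> D j}"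
      show "j \<in> \<sigma> ` {j. j < l - 1 \<and> D (\<sigma> j)}"
      proof (cases "j < i")
        case True
        then have "\<sigma> j = j" by (simp add: \<sigma>_def)
        then show ?thesis using j True assms by (intro image_eqI[of _ _ j]) auto
      next
        case False
        then have "\<sigma> (j - 1) = j" using j by (auto simp: \<sigma>_def)
        then show ?thesis using j False assms by (intro image_eqI[of _ _ "j - 1"]) auto
      qed
    qed
  qed
  show ?thesis unfolding L using card_image[OF inj, of "{j. j < l - 1 \<and> D (\<sigma> j)}"] im
    by (simp add: D_def)
qed

lemma count_red2:
  assumes "i < l" "(i,a) \<in> S" "(i,a) \<in> T"
  shows "card {j. j < l - 1 \<and> block_trace (red l i S) j \<inter> block_trace (red l i T) j = {}}
    = card {j. j < l \<and> block_trace S j \<inter> block_trace T j = {}}"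
proof -
  have "{j. j < l \<and> block_trace S j \<inter> block_trace T j = {}} =
        {j. j < l \<and> j \<noteq> i \<and> block_trace S j \<inter> block_trace T j = {}}"
    using assms by (auto simp: block_trace_def)
  then show ?thesis using count_red[OF assms(1)] by simp
qed

lemma sub_bound:
  assumes F: "xor_family l n k F" and i: "i < l" and k: "k \<ge> 1"
  shows "card (sub F i a) \<le> f_xor (l - 1) n k"
proof -
  let ?G = "red l i ` sub F i a"
  have tr: "S \<in> F \<Longrightarrow> j < l - 1 \<Longrightarrow> card (block_trace (red l i S) j) = k" for S j
    using F i by (auto simp: xor_family_def trace_red)
  have fam: "xor_family (l - 1) n k ?G"
    unfolding xor_family_def
  proof (rule conjI; intro ballI)
    fix R assume "R \<in> ?G"
    then obtain S where S: "S \<in> F" "R = red l i S" by (auto simp: sub_def)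
    have "S \<subseteq> {..<l} \<times> {..<n}" using F S by (auto simp: xor_family_def)
    then have "R \<subseteq> {..<l - 1} \<times> {..<n}" using S by (auto simp: red_def)
    then show "R \<subseteq> {..<l - 1} \<times> {..<n} \<and> (\<forall>j<l - 1. card (block_trace R j) = k)"
      using tr S by (auto simp: sub_def)
  next
    fix R R' assume "R \<in> ?G" "R' \<in> ?G"
    then obtain S T where S: "S \<in> F" "R = red l i S" "(i,a) \<in> S"
        and T: "T \<in> F" "R' = red l i T" "(i,a) \<in> T" by (auto simp: sub_def)
    show "R \<noteq> R' \<longrightarrow> odd (card {j. j < l - 1 \<and> block_trace R j \<inter> block_trace R' j = {}})"
    proof
      assume "R \<noteq> R'"
      then have "S \<noteq> T" using S T by auto
      then have "odd (card {j. j < l \<and> block_trace S j \<inter> block_trace T j = {}})"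
        using F S T by (auto simp: xor_family_def)
      then show "odd (card {j. j < l - 1 \<and> block_trace R j \<inter> block_trace R' j = {}})"
        using count_red2[OF i S(3) T(3)] S T by simp
    qed
  qed
  have inj: "inj_on (red l i) (sub F i a)"
  proof (rule inj_onI, rule ccontr)
    fix S T assume S: "S \<in> sub F i a" and T: "T \<in> sub F i a" and e: "red l i S = red l i T"
      and ne: "S \<noteq> T"
    have "odd (card {j. j < l \<and> block_trace S j \<inter> block_trace T j = {}})"
      using F S T ne by (auto simp: xor_family_def sub_def)
    moreover have E: "{j. j < l - 1 \<and> block_trace (red l i S) j \<inter> block_trace (red l i T) j = {}} = {}"
    proof -
      have "block_trace (red l i S) j \<noteq> {}" if "j < l - 1" for j
        using tr[of S j] S that k by (auto simp: sub_def)
      then show ?thesis using e by auto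
    qed
    moreover have "(i,a) \<in> S" "(i,a) \<in> T" using S T by (auto simp: sub_def)
    ultimately have "card {j. j < l \<and> block_trace S j \<inter> block_trace T j = {}} = 0"
      using count_red2[OF i, of a S T] unfolding E by (metis card.empty)
    then show False using \<open>odd _\<close> by (metis dvd_0_right)
  qed
  have "card (sub F i a) = card ?G" using card_image[OF inj] by simp
  also have "\<dots> \<le> f_xor (l - 1) n k" by (rule card_le_f[OF fam])
  finally show ?thesis .
qed

lemma card_filter_sum: "finite A \<Longrightarrow> card {x\<in>A. P x} = (\<Sum>x\<in>A. if P x then 1 else 0 :: nat)"
  using sum.inter_filter[of A "\<lambda>_. 1::nat" P] by simp

lemma partA:
  assumes l: "l \<ge> 1" and k: "k \<ge> 1"
  shows "k * f_xor l n k \<le> n * f_xor (l - 1) n k"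
proof -
  obtain F where F: "xor_family l n k F" and cF: "card F = f_xor l n k" using f_attained by blast
  have fin: "finite F" using fin_fam[OF F] .
  let ?i = "l - 1"
  have i: "?i < l" using l by simp
  have tr: "(\<Sum>a<n. if (?i,a) \<in> S then 1 else 0 :: nat) = k" if S: "S \<in> F" for S
  proof -
    have "(\<Sum>a<n. if (?i,a) \<in> S then 1 else 0 :: nat) = card {a\<in>{..<n}. (?i,a) \<in> S}"
      by (rule card_filter_sum[symmetric]) simp
    also have "{a\<in>{..<n}. (?i,a) \<in> S} = block_trace S ?i"
      using F S by (auto simp: xor_family_def block_trace_def)
    also have "card \<dots> = k" using F S i by (auto simp: xor_family_def)
    finally show ?thesis .
  qed
  have "k * card F = (\<Sum>S\<in>F. \<Sum>a<n. if (?i,a) \<in> S then 1 else 0 :: nat)"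
    using tr by simp
  also have "\<dots> = (\<Sum>a<n. \<Sum>S\<in>F. if (?i,a) \<in> S then 1 else 0 :: nat)"
    by (rule sum.swap)
  also have "\<dots> = (\<Sum>a<n. card (sub F ?i a))"
    using card_filter_sum[OF fin] by (simp add: sub_def)
  also have "\<dots> \<le> (\<Sum>a<n. f_xor (l - 1) n k)"
    by (intro sum_mono sub_bound[OF F i k])
  also have "\<dots> = n * f_xor (l - 1) n k" by simp
  finally show ?thesis using cF by simp
qed

lemma card_set:
  assumes "S \<subseteq> {..<l} \<times> {..<n}" "\<forall>i<l. card (block_trace S i) = k" "k \<ge> 1"
  shows "card S = k * l"
proof -
  have "S = Sigma {..<l} (block_trace S)" using assms(1) by (auto simp: block_trace_def)
  moreover have "finite (block_trace S i)" if "i < l" for i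
    using assms(2,3) that by (metis card.infinite not_one_le_zero)
  ultimately have "card S = (\<Sum>i<l. card (block_trace S i))" by (metis card_SigmaI finite_lessThan lessThan_iff)
  also have "\<dots> = k * l" using assms(2) by simp
  finally show ?thesis .
qed

lemma partB:
  assumes l: "l \<ge> 1" and k: "k \<ge> 1" and kn: "k \<le> n" and ev: "even l"
  shows "f_xor l n k \<le> 1 + k * l * (f_xor (l - 1) n k - 1)"
proof -
  obtain F where F: "xor_family l n k F" and cF: "card F = f_xor l n k" using f_attained by blast
  have fin: "finite F" using fin_fam[OF F] .
  show ?thesis
  proof (cases "F = {}")
    case True then show ?thesis using cF by simp
  next
    case False
    then obtain S0 where S0: "S0 \<in> F" by blast
    have S0sub: "S0 \<subseteq> {..<l} \<times> {..<n}" and S0tr: "\<forall>i<l. card (block_trace S0 i) = k"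
      using F S0 by (auto simp: xor_family_def)
    have cS0: "card S0 = k * l" using card_set[OF S0sub S0tr k] .
    have finS0: "finite S0" using S0sub by (meson finite_SigmaI finite_lessThan finite_subset)
    have cover: "F - {S0} \<subseteq> (\<Union>p\<in>S0. sub F (fst p) (snd p) - {S0})"
    proof
      fix T assume T: "T \<in> F - {S0}"
      then have "odd (card {i. i < l \<and> block_trace S0 i \<inter> block_trace T i = {}})"
        using F S0 by (auto simp: xor_family_def)
      then have "\<exists>i<l. block_trace S0 i \<inter> block_trace T i \<noteq> {}"
      proof (rule contrapos_pp)
        assume "\<not> (\<exists>i<l. block_trace S0 i \<inter> block_trace T i \<noteq> {})"
        then have "{i. i < l \<and> block_trace S0 i \<inter> block_trace T i = {}} = {..<l}" by auto
        then show "\<not> odd (card {i. i < l \<and> block_trace S0 i \<inter> block_trace T i = {}})"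
          using ev by simp
      qed
      then obtain i a where "i < l" "(i,a) \<in> S0" "(i,a) \<in> T" by (auto simp: block_trace_def)
      then show "T \<in> (\<Union>p\<in>S0. sub F (fst p) (snd p) - {S0})"
        using T by (auto simp: sub_def intro!: bexI[of _ "(i,a)"])
    qed
    have bnd: "card (sub F (fst p) (snd p) - {S0}) \<le> f_xor (l - 1) n k - 1" if p: "p \<in> S0" for p
    proof -
      have "fst p < l" using p S0sub by auto
      then have "card (sub F (fst p) (snd p)) \<le> f_xor (l - 1) n k"
        using sub_bound[OF F _ k] by blast
      moreover have "S0 \<in> sub F (fst p) (snd p)" using S0 p by (auto simp: sub_def)
      moreover have "finite (sub F (fst p) (snd p))" using fin by (auto simp: sub_def)
      ultimately show ?thesis by simp
    qed
    have "card (F - {S0}) \<le> card (\<Union>p\<in>S0. sub F (fst p) (snd p) - {S0})"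
      by (rule card_mono[OF _ cover]) (use fin finS0 in \<open>auto simp: sub_def\<close>)
    also have "\<dots> \<le> (\<Sum>p\<in>S0. card (sub F (fst p) (snd p) - {S0}))"
      by (rule card_UN_le[OF finS0])
    also have "\<dots> \<le> (\<Sum>p\<in>S0. f_xor (l - 1) n k - 1)" by (intro sum_mono bnd)
    also have "\<dots> = k * l * (f_xor (l - 1) n k - 1)" using cS0 by simp
    finally have "card (F - {S0}) \<le> k * l * (f_xor (l - 1) n k - 1)" .
    moreover have "card F = 1 + card (F - {S0})" using fin S0
      by (metis card_Suc_Diff1 plus_1_eq_Suc)
    ultimately show ?thesis using cF by simp
  qed
qed

theorem mainTheorem12:
  fixes l n k :: nat
  assumes "l \<ge> 2" and "k \<ge> 1" and "n \<ge> 1"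
  shows "real (f_xor l n k) \<le> real n / real k * real (f_xor (l - 1) n k)
    \<and> (k \<le> n \<and> even l \<longrightarrow>
        real (f_xor l n k) \<le> 1 + real k * real l * (real (f_xor (l - 1) n k) - 1)
      \<and> 1 + real k * real l * (real (f_xor (l - 1) n k) - 1) \<le> real k * real l * real (f_xor (l - 1) n k))"
proof (intro conjI impI)
  have k0: "real k > 0" using assms by simp
  have "k * f_xor l n k \<le> n * f_xor (l - 1) n k" using partA[of l k n] assms by simp
  then have "real k * real (f_xor l n k) \<le> real n * real (f_xor (l - 1) n k)"
    by (metis of_nat_le_iff of_nat_mult)
  then show "real (f_xor l n k) \<le> real n / real k * real (f_xor (l - 1) n k)"
    using k0 by (simp add: field_simps)
next
  assume h: "k \<le> n \<and> even l"
  have f1: "1 \<le> f_xor (l - 1) n k" using f_pos h by blast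
  have "f_xor l n k \<le> 1 + k * l * (f_xor (l - 1) n k - 1)"
    using partB[of l k n] assms h by simp
  then have "real (f_xor l n k) \<le> real (1 + k * l * (f_xor (l - 1) n k - 1))" by linarith
  then show "real (f_xor l n k) \<le> 1 + real k * real l * (real (f_xor (l - 1) n k) - 1)"
    using f1 by (simp add: of_nat_diff)
next
  have "1 \<le> k * l" using assms by simp
  then have "1 \<le> real k * real l" by (metis of_nat_1 of_nat_le_iff of_nat_mult)
  then show "1 + real k * real l * (real (f_xor (l - 1) n k) - 1) \<le> real k * real l * real (f_xor (l - 1) n k)"
    by (simp add: algebra_simps)
qed

end
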